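(* Let the bat graph be the graph obtained from an induced cycle $C_4$ on vertices $u_1,u_2,u_3,u_4$ and four vertex-disjoint copies of $K_{2,4}$ by identifying, for each $i$, one vertex of the part of size $4$ of the $i$-th copy with $u_i$. In every $B_1$-EPG representation of the bat graph, the $C_4$ on $u_1,u_2,u_3,u_4$ is represented by a square-frame.
   Context: A grid is the set of integer points of the plane; a grid edge joins two grid points at distance $1$. A path in the grid is a sequence of distinct grid edges in which consecutive edges share exactly one grid point and non-consecutive edges share none; a bend is a pair of consecutive edges with different directions (horizontal/vertical), and the bend point is their common grid point. An EPG representation of $G$ is a family $(P_v)_{v\in V(G)}$ of grid paths such that distinct $u,v$ are adjacent iff $P_u,P_v$ share a grid edge; it is $B_1$-EPG if every path has at most one bend. A one-bend path has shape $\llcorner$, $\lrcorner$, $\ulcorner$ or $\urcorner$ according to which two directions leave its bend point ($\llcorner$: up and right; $\lrcorner$: up and left; $\ulcorner$: down and right; $\urcorner$: down and left). A frame is a set of four paths $P_1,\dots,P_4$, each with its bend at a different corner of an axis-parallel rectangle, such that $P_1\cap P_2$, $P_1\cap P_3$, $P_2\cap P_4$, $P_3\cap P_4$ each contain at least one grid edge, while $P_1\cap P_4$ and $P_2\cap P_3$ contain no grid edge. A square-frame is a frame on a rectangle with corners $(x_1,y_1),(x_2,y_1),(x_1,y_2),(x_2,y_2)$, $x_1<x_2$, $y_1<y_2$, in which $P_1,P_2,P_3,P_4$ have bend points $(x_1,y_1),(x_2,y_1),(x_1,y_2),(x_2,y_2)$ and shapes $\llcorner,\lrcorner,\ulcorner,\urcorner$,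 respectively. *)

theory Defs
  imports Main
begin

type_synonym gpoint = "int \<times> int"
type_synonym gedge = "gpoint set"
type_synonym gpath = "gedge list"

definition grid_edge :: "gedge \<Rightarrow> bool" where
  "grid_edge e \<longleftrightarrow> (\<exists>p q. e = {p, q} \<and> \<bar>fst p - fst q\<bar> + \<bar>snd p - snd q\<bar> = 1)"

definition horizontal :: "gedge \<Rightarrow> bool" where
  "horizontal e \<longleftrightarrow> (\<exists>p q. e = {p, q} \<and> p \<noteq> q \<and> snd p = snd q)"

definition grid_path :: "gpath \<Rightarrow> bool" where
  "grid_path es \<longleftrightarrow> es \<noteq> [] \<and> distinct es \<and> (\<forall>e\<in>set es. grid_edge e) \<and>
     (\<forall>i. Suc i < length es \<longrightarrow> card (es ! i \<inter> es ! Suc i) = 1) \<and>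
     (\<forall>i j. Suc i < j \<and> j < length es \<longrightarrow> es ! i \<inter> es ! j = {})"

definition num_bends :: "gpath \<Rightarrow> nat" where
  "num_bends es = card {i. Suc i < length es \<and> horizontal (es ! i) \<noteq> horizontal (es ! Suc i)}"

definition shares_edge :: "gpath \<Rightarrow> gpath \<Rightarrow> bool" where
  "shares_edge P Q \<longleftrightarrow> set P \<inter> set Q \<noteq> {}"

definition mv :: "gpoint \<Rightarrow> int \<times> int \<Rightarrow> gpoint" where
  "mv b d = (fst b + fst d, snd b + snd d)"

abbreviation "dir_up \<equiv> ((0::int), (1::int))"
abbreviation "dir_down \<equiv> ((0::int), (-1::int))"
abbreviation "dir_right \<equiv> ((1::int), (0::int))"
abbreviation "dir_left \<equiv> ((-1::int), (0::int))"

definition bend_at :: "gpath \<Rightarrow> gpoint \<Rightarrow> int \<times> int \<Rightarrow> int \<times> int \<Rightarrow> bool" where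
  "bend_at P b d1 d2 \<longleftrightarrow> (\<exists>i. Suc i < length P \<and>
      {P ! i, P ! Suc i} = {{b, mv b d1}, {b, mv b d2}})"

definition square_frame :: "gpath \<Rightarrow> gpath \<Rightarrow> gpath \<Rightarrow> gpath \<Rightarrow> bool" where
  "square_frame P1 P2 P3 P4 \<longleftrightarrow> (\<exists>x1 x2 y1 y2. x1 < x2 \<and> y1 < y2 \<and>
     bend_at P1 (x1, y1) dir_up dir_right \<and>
     bend_at P2 (x2, y1) dir_up dir_left \<and>
     bend_at P3 (x1, y2) dir_down dir_right \<and>
     bend_at P4 (x2, y2) dir_down dir_left \<and>
     shares_edge P1 P2 \<and> shares_edge P1 P3 \<and> shares_edge P2 P4 \<and> shares_edge P3 P4 \<and>
     \<not> shares_edge P1 P4 \<and> \<not> shares_edge P2 P3)"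

text \<open>Bat graph. Vertices U i (i<4) form the induced C4 (u_1..u_4 = U 0..U 3).
  Copy i of K_{2,4}: part of size 2 is A i 0, A i 1; part of size 4 is U i, B i 1, B i 2, B i 3.\<close>
datatype bat_vertex = U nat | A nat nat | B nat nat

definition bat_V :: "bat_vertex set" where
  "bat_V = {U i | i. i < 4} \<union> {A i j | i j. i < 4 \<and> j < 2} \<union> {B i k | i k. i < 4 \<and> 1 \<le> k \<and> k \<le> 3}"

fun bat_adj0 :: "bat_vertex \<Rightarrow> bat_vertex \<Rightarrow> bool" where
  "bat_adj0 (U i) (U j) = (j = (i + 1) mod 4)"
| "bat_adj0 (A i j) (U k) = (k = i)"
| "bat_adj0 (A i j) (B k l) = (k = i)"
| "bat_adj0 _ _ = False"

definition bat_adj :: "bat_vertex \<Rightarrow> bat_vertex \<Rightarrow> bool" where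
  "bat_adj u v \<longleftrightarrow> u \<in> bat_V \<and> v \<in> bat_V \<and> (bat_adj0 u v \<or> bat_adj0 v u)"

definition B1_EPG_rep :: "'v set \<Rightarrow> ('v \<Rightarrow> 'v \<Rightarrow> bool) \<Rightarrow> ('v \<Rightarrow> gpath) \<Rightarrow> bool" where
  "B1_EPG_rep V adj P \<longleftrightarrow>
     (\<forall>v\<in>V. grid_path (P v) \<and> num_bends (P v) \<le> 1) \<and>
     (\<forall>u\<in>V. \<forall>v\<in>V. u \<noteq> v \<longrightarrow> (adj u v \<longleftrightarrow> shares_edge (P u) (P v)))"

end

theory Submission
  imports Defs
begin

definition hE :: "int \<Rightarrow> int \<Rightarrow> gedge" where "hE i y = {(i,y),(i+1,y)}"
definition vE :: "int \<Rightarrow> int \<Rightarrow> gedge" where "vE x j = {(x,j),(x,j+1)}"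

lemma hE_eq[simp]: "hE i y = hE i' y' \<longleftrightarrow> i = i' \<and> y = y'"
  unfolding hE_def by (auto simp: doubleton_eq_iff)
lemma vE_eq[simp]: "vE x j = vE x' j' \<longleftrightarrow> x = x' \<and> j = j'"
  unfolding vE_def by (auto simp: doubleton_eq_iff)
lemma hE_vE[simp]: "hE i y \<noteq> vE x j" "vE x j \<noteq> hE i y"
  unfolding hE_def vE_def by (auto simp: doubleton_eq_iff)

lemma horizontal_hE[simp]: "horizontal (hE i y)"
  unfolding horizontal_def hE_def by (rule exI[of _ "(i,y)"], rule exI[of _ "(i+1,y)"]) auto
lemma horizontal_vE[simp]: "\<not> horizontal (vE x j)"
  unfolding horizontal_def vE_def by (auto simp: doubleton_eq_iff)

lemma grid_edge_cases:
  assumes "grid_edge e"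
  shows "(\<exists>i y. e = hE i y) \<or> (\<exists>x j. e = vE x j)"
proof -
  obtain p q where e: "e = {p,q}" and d: "\<bar>fst p - fst q\<bar> + \<bar>snd p - snd q\<bar> = 1"
    using assms unfolding grid_edge_def by blast
  obtain a b c d' where p: "p = (a,b)" and q: "q = (c,d')" by fastforce
  have "(b = d' \<and> (c = a + 1 \<or> a = c + 1)) \<or> (a = c \<and> (d' = b + 1 \<or> b = d' + 1))"
    using d p q by auto
  then show ?thesis
  proof (elim disjE conjE)
    assume "b = d'" "c = a + 1" then have "e = hE a b" unfolding e p q hE_def by auto
    then show ?thesis by blast
  next
    assume "b = d'" "a = c + 1" then have "e = hE c b" unfolding e p q hE_def by auto
    then show ?thesis by blast
  next
    assume "a = c" "d' = b + 1" then have "e = vE a b" unfolding e p q vE_def by auto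
    then show ?thesis by blast
  next
    assume "a = c" "b = d' + 1" then have "e = vE a d'" unfolding e p q vE_def by auto
    then show ?thesis by blast
  qed
qed

lemma grid_edge_h: "grid_edge e \<Longrightarrow> horizontal e \<Longrightarrow> \<exists>i y. e = hE i y"
  using grid_edge_cases by fastforce
lemma grid_edge_v: "grid_edge e \<Longrightarrow> \<not> horizontal e \<Longrightarrow> \<exists>x j. e = vE x j"
  using grid_edge_cases by fastforce

lemma card1_hh:
  assumes "card (hE m y \<inter> hE c y') = 1"
  shows "y' = y \<and> (c = m + 1 \<or> c = m - 1)"
proof (rule ccontr)
  assume a: "\<not> ?thesis"
  have "hE m y \<inter> hE c y' = {} \<or> hE m y \<inter> hE c y' = hE m y"
    using a unfolding hE_def by auto
  moreover have "card (hE m y) = 2" unfolding hE_def by auto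
  ultimately show False using assms by auto
qed

lemma card1_vv:
  assumes "card (vE x m \<inter> vE x' c) = 1"
  shows "x' = x \<and> (c = m + 1 \<or> c = m - 1)"
proof (rule ccontr)
  assume a: "\<not> ?thesis"
  have "vE x m \<inter> vE x' c = {} \<or> vE x m \<inter> vE x' c = vE x m"
    using a unfolding vE_def by auto
  moreover have "card (vE x m) = 2" unfolding vE_def by auto
  ultimately show False using assms by auto
qed

lemma gp_distinct: "grid_path es \<Longrightarrow> i < length es \<Longrightarrow> j < length es \<Longrightarrow> i \<noteq> j \<Longrightarrow> es ! i \<noteq> es ! j"
  unfolding grid_path_def by (simp add: nth_eq_iff_index_eq)

lemma gp_card1: "grid_path es \<Longrightarrow> Suc i < length es \<Longrightarrow> card (es ! i \<inter> es ! Suc i) = 1"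
  unfolding grid_path_def by blast

lemma gp_disj: "grid_path es \<Longrightarrow> Suc i < j \<Longrightarrow> j < length es \<Longrightarrow> es ! i \<inter> es ! j = {}"
  unfolding grid_path_def by blast

lemma gp_edge: "grid_path es \<Longrightarrow> i < length es \<Longrightarrow> grid_edge (es ! i)"
  unfolding grid_path_def by auto

lemma ins_lo: assumes "lo \<le> hi" shows "insert (f (lo-1)) {f i |i. lo \<le> i \<and> i < hi} = {f i |i::int. lo-1 \<le> i \<and> i < hi}"
proof (rule set_eqI)
  fix e show "e \<in> insert (f (lo-1)) {f i |i. lo \<le> i \<and> i < hi} \<longleftrightarrow> e \<in> {f i |i::int. lo-1 \<le> i \<and> i < hi}"
  proof
    assume "e \<in> insert (f (lo-1)) {f i |i. lo \<le> i \<and> i < hi}"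
    then show "e \<in> {f i |i::int. lo-1 \<le> i \<and> i < hi}"
    proof
      assume "e = f (lo - 1)" then show ?thesis using assms by force
    next
      assume "e \<in> {f i |i. lo \<le> i \<and> i < hi}" then show ?thesis by force
    qed
  next
    assume "e \<in> {f i |i::int. lo-1 \<le> i \<and> i < hi}"
    then obtain i where "e = f i" "lo - 1 \<le> i" "i < hi" by blast
    then show "e \<in> insert (f (lo-1)) {f i |i. lo \<le> i \<and> i < hi}"
      by (cases "i = lo - 1") auto
  qed
qed

lemma ins_hi: assumes "lo \<le> hi" shows "insert (f hi) {f i |i. lo \<le> i \<and> i < hi} = {f i |i::int. lo \<le> i \<and> i < hi + 1}"
proof (rule set_eqI)
  fix e show "e \<in> insert (f hi) {f i |i. lo \<le> i \<and> i < hi} \<longleftrightarrow> e \<in> {f i |i::int. lo \<le> i \<and> i < hi + 1}"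
  proof
    assume "e \<in> insert (f hi) {f i |i. lo \<le> i \<and> i < hi}"
    then show "e \<in> {f i |i::int. lo \<le> i \<and> i < hi + 1}"
    proof
      assume "e = f hi" then show ?thesis using assms by force
    next
      assume "e \<in> {f i |i. lo \<le> i \<and> i < hi}" then show ?thesis by force
    qed
  next
    assume "e \<in> {f i |i::int. lo \<le> i \<and> i < hi + 1}"
    then obtain i where "e = f i" "lo \<le> i" "i < hi + 1" by blast
    then show "e \<in> insert (f hi) {f i |i. lo \<le> i \<and> i < hi}"
      by (cases "i = hi") auto
  qed
qed

lemma img_Suc: "(\<lambda>k. es ! k) ` {i0..i0 + Suc d} = insert (es ! (i0 + Suc d)) ((\<lambda>k. es ! k) ` {i0..i0+d})"
proof -
  have "{i0..i0+Suc d} = insert (i0 + Suc d) {i0..i0+d}" by auto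
  then show ?thesis by simp
qed

lemma single_int: "{f ia | ia. (i::int) \<le> ia \<and> ia < i + 1} = {f i}"
proof (rule set_eqI)
  fix e show "e \<in> {f ia | ia. (i::int) \<le> ia \<and> ia < i + 1} \<longleftrightarrow> e \<in> {f i}"
  proof
    assume "e \<in> {f ia | ia. (i::int) \<le> ia \<and> ia < i + 1}"
    then obtain ia where "e = f ia" "i \<le> ia" "ia < i + 1" by blast
    then have "ia = i" by simp
    then show "e \<in> {f i}" using \<open>e = f ia\<close> by simp
  next
    assume "e \<in> {f i}" then show "e \<in> {f ia | ia. (i::int) \<le> ia \<and> ia < i + 1}" by force
  qed
qed

lemma straight_h:
  assumes gp: "grid_path es" and len: "i0 + d < length es"
    and hor: "\<forall>k. i0 \<le> k \<and> k \<le> i0 + d \<longrightarrow> horizontal (es ! k)"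
  shows "\<exists>y lo hi. lo < hi \<and> (\<lambda>k. es ! k) ` {i0..i0+d} = {hE i y | i. lo \<le> i \<and> i < hi}"
  using len hor
proof (induction d)
  case 0
  have h0: "horizontal (es ! i0)" using 0(2) by simp
  have l0: "i0 < length es" using 0(1) by simp
  obtain i y where "es ! i0 = hE i y"
    using grid_edge_h[OF gp_edge[OF gp l0] h0] by blast
  then have "(\<lambda>k. es ! k) ` {i0..i0+0} = {hE ia y | ia. i \<le> ia \<and> ia < i + 1}"
    using single_int[of "\<lambda>ia. hE ia y" i] by simp
  then show ?case by (intro exI[of _ y] exI[of _ i] exI[of _ "i+1"] conjI) simp_all
next
  case (Suc d)
  have p1: "i0 + d < length es" using Suc.prems(1) by simp
  have p2: "\<forall>k. i0 \<le> k \<and> k \<le> i0 + d \<longrightarrow> horizontal (es ! k)"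
    using Suc.prems(2) by simp
  from Suc.IH[OF p1 p2] obtain y lo hi where lh: "lo < hi" and S: "(\<lambda>k. es ! k) ` {i0..i0+d} = {hE i y | i. lo \<le> i \<and> i < hi}"
    by (elim exE conjE) (rule that)
  have "es ! (i0+d) \<in> (\<lambda>k. es ! k) ` {i0..i0+d}" by simp
  then have "es ! (i0+d) \<in> {hE i y | i. lo \<le> i \<and> i < hi}" using S by simp
  then obtain m where m: "es ! (i0 + d) = hE m y" "lo \<le> m" "m < hi" by blast
  have h1: "horizontal (es ! (i0 + Suc d))" using Suc.prems(2) by simp
  have l1: "i0 + Suc d < length es" using Suc.prems(1) by simp
  obtain c y' where c: "es ! (i0 + Suc d) = hE c y'"
    using grid_edge_h[OF gp_edge[OF gp l1] h1] by blast
  have "card (es ! (i0+d) \<inter> es ! Suc (i0 + d)) = 1"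
    using gp_card1[OF gp, of "i0+d"] l1 by simp
  then have "card (hE m y \<inter> hE c y') = 1" using m(1) c by simp
  then have cc: "y' = y \<and> (c = m + 1 \<or> c = m - 1)" by (rule card1_hh)
  have notin: "hE c y \<notin> (\<lambda>k. es ! k) ` {i0..i0+d}"
  proof
    assume "hE c y \<in> (\<lambda>k. es ! k) ` {i0..i0+d}"
    then obtain k where k: "k \<in> {i0..i0+d}" "hE c y = es ! k" by blast
    then have e1: "es ! k = es ! (i0 + Suc d)" using c cc by simp
    have k1: "k < length es" "k \<noteq> i0 + Suc d" using k(1) l1 by auto
    show False using gp_distinct[OF gp k1(1) l1 k1(2)] e1 by contradiction
  qed
  have "\<not> (lo \<le> c \<and> c < hi)"
  proof
    assume "lo \<le> c \<and> c < hi"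
    then have "hE c y \<in> {hE i y | i. lo \<le> i \<and> i < hi}" by (intro CollectI exI[of _ c]) simp
    then show False using notin S by simp
  qed
  then have c2: "c = lo - 1 \<or> c = hi" using cc m(2,3) by linarith
  have img: "(\<lambda>k. es ! k) ` {i0..i0+Suc d} = insert (hE c y) {hE i y | i. lo \<le> i \<and> i < hi}"
    using img_Suc[of es i0 d] c cc S by simp
  show ?case
  proof (cases "c = lo - 1")
    case True
    have "(\<lambda>k. es ! k) ` {i0..i0+Suc d} = {hE i y | i. lo - 1 \<le> i \<and> i < hi}"
      using img True ins_lo[of lo hi "\<lambda>i. hE i y"] lh by simp
    then show ?thesis using lh
      by (intro exI[of _ y] exI[of _ "lo - 1"] exI[of _ hi] conjI) simp_all
  next
    case False
    then have "c = hi" using c2 by simp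
    then have "(\<lambda>k. es ! k) ` {i0..i0+Suc d} = {hE i y | i. lo \<le> i \<and> i < hi + 1}"
      using img ins_hi[of lo hi "\<lambda>i. hE i y"] lh by simp
    then show ?thesis using lh
      by (intro exI[of _ y] exI[of _ lo] exI[of _ "hi+1"] conjI) simp_all
  qed
qed


lemma straight_v:
  assumes gp: "grid_path es" and len: "i0 + d < length es"
    and hor: "\<forall>k. i0 \<le> k \<and> k \<le> i0 + d \<longrightarrow> \<not> horizontal (es ! k)"
  shows "\<exists>y lo hi. lo < hi \<and> (\<lambda>k. es ! k) ` {i0..i0+d} = {vE y i | i. lo \<le> i \<and> i < hi}"
  using len hor
proof (induction d)
  case 0
  have h0: "\<not> horizontal (es ! i0)" using 0(2) by simp
  have l0: "i0 < length es" using 0(1) by simp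
  obtain i y where "es ! i0 = vE y i"
    using grid_edge_v[OF gp_edge[OF gp l0] h0] by blast
  then have "(\<lambda>k. es ! k) ` {i0..i0+0} = {vE y ia | ia. i \<le> ia \<and> ia < i + 1}"
    using single_int[of "\<lambda>ia. vE y ia" i] by simp
  then show ?case by (intro exI[of _ y] exI[of _ i] exI[of _ "i+1"] conjI) simp_all
next
  case (Suc d)
  have p1: "i0 + d < length es" using Suc.prems(1) by simp
  have p2: "\<forall>k. i0 \<le> k \<and> k \<le> i0 + d \<longrightarrow> \<not> horizontal (es ! k)"
    using Suc.prems(2) by simp
  from Suc.IH[OF p1 p2] obtain y lo hi where lh: "lo < hi" and S: "(\<lambda>k. es ! k) ` {i0..i0+d} = {vE y i | i. lo \<le> i \<and> i < hi}"
    by (elim exE conjE) (rule that)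
  have "es ! (i0+d) \<in> (\<lambda>k. es ! k) ` {i0..i0+d}" by simp
  then have "es ! (i0+d) \<in> {vE y i | i. lo \<le> i \<and> i < hi}" using S by simp
  then obtain m where m: "es ! (i0 + d) = vE y m" "lo \<le> m" "m < hi" by blast
  have h1: "\<not> horizontal (es ! (i0 + Suc d))" using Suc.prems(2) by simp
  have l1: "i0 + Suc d < length es" using Suc.prems(1) by simp
  obtain c y' where c: "es ! (i0 + Suc d) = vE y' c"
    using grid_edge_v[OF gp_edge[OF gp l1] h1] by blast
  have "card (es ! (i0+d) \<inter> es ! Suc (i0 + d)) = 1"
    using gp_card1[OF gp, of "i0+d"] l1 by simp
  then have "card (vE y m \<inter> vE y' c) = 1" using m(1) c by simp
  then have cc: "y' = y \<and> (c = m + 1 \<or> c = m - 1)" by (rule card1_vv)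
  have notin: "vE y c \<notin> (\<lambda>k. es ! k) ` {i0..i0+d}"
  proof
    assume "vE y c \<in> (\<lambda>k. es ! k) ` {i0..i0+d}"
    then obtain k where k: "k \<in> {i0..i0+d}" "vE y c = es ! k" by blast
    then have e1: "es ! k = es ! (i0 + Suc d)" using c cc by simp
    have k1: "k < length es" "k \<noteq> i0 + Suc d" using k(1) l1 by auto
    show False using gp_distinct[OF gp k1(1) l1 k1(2)] e1 by contradiction
  qed
  have "\<not> (lo \<le> c \<and> c < hi)"
  proof
    assume "lo \<le> c \<and> c < hi"
    then have "vE y c \<in> {vE y i | i. lo \<le> i \<and> i < hi}" by (intro CollectI exI[of _ c]) simp
    then show False using notin S by simp
  qed
  then have c2: "c = lo - 1 \<or> c = hi" using cc m(2,3) by linarith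
  have img: "(\<lambda>k. es ! k) ` {i0..i0+Suc d} = insert (vE y c) {vE y i | i. lo \<le> i \<and> i < hi}"
    using img_Suc[of es i0 d] c cc S by simp
  show ?case
  proof (cases "c = lo - 1")
    case True
    have "(\<lambda>k. es ! k) ` {i0..i0+Suc d} = {vE y i | i. lo - 1 \<le> i \<and> i < hi}"
      using img True ins_lo[of lo hi "\<lambda>i. vE y i"] lh by simp
    then show ?thesis using lh
      by (intro exI[of _ y] exI[of _ "lo - 1"] exI[of _ hi] conjI) simp_all
  next
    case False
    then have "c = hi" using c2 by simp
    then have "(\<lambda>k. es ! k) ` {i0..i0+Suc d} = {vE y i | i. lo \<le> i \<and> i < hi + 1}"
      using img ins_hi[of lo hi "\<lambda>i. vE y i"] lh by simp
    then show ?thesis using lh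
      by (intro exI[of _ y] exI[of _ lo] exI[of _ "hi+1"] conjI) simp_all
  qed
qed


lemma orient1:
  assumes "\<forall>i. Suc i < length es \<and> i \<noteq> m \<longrightarrow> horizontal (es ! i) = horizontal (es ! Suc i)"
  shows "k \<le> m \<Longrightarrow> k < length es \<Longrightarrow> horizontal (es ! k) = horizontal (es ! 0)"
proof (induction k)
  case 0 then show ?case by simp
next
  case (Suc k)
  then have "horizontal (es ! k) = horizontal (es ! Suc k)" using assms by simp
  then show ?case using Suc by simp
qed

lemma orient2:
  assumes "\<forall>i. Suc i < length es \<and> i \<noteq> m \<longrightarrow> horizontal (es ! i) = horizontal (es ! Suc i)"
  shows "m < k \<Longrightarrow> k < length es \<Longrightarrow> horizontal (es ! k) = horizontal (es ! Suc m)"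
proof (induction k)
  case 0 then show ?case by simp
next
  case (Suc k)
  show ?case
  proof (cases "k = m")
    case True then show ?thesis by simp
  next
    case False
    then have "horizontal (es ! k) = horizontal (es ! Suc k)" using assms Suc.prems by simp
    then show ?thesis using Suc False by simp
  qed
qed

lemma bend_core:
  assumes gp: "grid_path es" and l: "n < length es" and mn: "m < n"
    and p1: "p \<in> es ! m" and p2: "p \<in> es ! Suc m"
  shows "\<forall>e\<in>(\<lambda>k. es ! k) ` {0..m}. e \<noteq> es ! m \<longrightarrow> p \<notin> e"
    and "\<forall>e\<in>(\<lambda>k. es ! k) ` {Suc m..n}. e \<noteq> es ! Suc m \<longrightarrow> p \<notin> e"
proof -
  show "\<forall>e\<in>(\<lambda>k. es ! k) ` {0..m}. e \<noteq> es ! m \<longrightarrow> p \<notin> e"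
  proof (intro ballI impI)
    fix e assume e: "e \<in> (\<lambda>k. es ! k) ` {0..m}" "e \<noteq> es ! m"
    from e(1) obtain j where j0: "j \<in> {0..m}" "e = es ! j" by blast
    have j: "j \<le> m" "e = es ! j" "j \<noteq> m" using j0 e(2) by auto
    then have "Suc j < Suc m" by simp
    then have "es ! j \<inter> es ! Suc m = {}" using gp_disj[OF gp, of j "Suc m"] l mn by simp
    then show "p \<notin> e" using j p2 by auto
  qed
  show "\<forall>e\<in>(\<lambda>k. es ! k) ` {Suc m..n}. e \<noteq> es ! Suc m \<longrightarrow> p \<notin> e"
  proof (intro ballI impI)
    fix e assume e: "e \<in> (\<lambda>k. es ! k) ` {Suc m..n}" "e \<noteq> es ! Suc m"
    from e(1) obtain j where j0: "j \<in> {Suc m..n}" "e = es ! j" by blast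
    have j: "Suc m \<le> j" "j \<le> n" "e = es ! j" "j \<noteq> Suc m" using j0 e(2) by auto
    then have "Suc m < j" by simp
    then have "es ! m \<inter> es ! j = {}" using gp_disj[OF gp, of m j] l j by simp
    then show "p \<notin> e" using j p1 by auto
  qed
qed

lemma h_endpoint:
  assumes "lo \<le> c" "c < hi" "x = c \<or> x = c + 1"
    and nz: "\<forall>i. lo \<le> i \<and> i < hi \<and> i \<noteq> c \<longrightarrow> (x,y) \<notin> hE i y"
  shows "lo \<le> x \<and> x \<le> hi \<and> (x = lo \<or> x = hi)"
proof -
  have "\<not> (lo < x \<and> x < hi)"
  proof
    assume a: "lo < x \<and> x < hi"
    show False
    proof (cases "x = c")
      case True
      then have "(x,y) \<in> hE (c-1) y" unfolding hE_def by simp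
      moreover have "lo \<le> c - 1 \<and> c - 1 < hi \<and> c - 1 \<noteq> c" using a True assms by simp
      ultimately show False using nz by blast
    next
      case False
      then have x: "x = c + 1" using assms by simp
      then have "(x,y) \<in> hE (c+1) y" unfolding hE_def by simp
      moreover have "lo \<le> c + 1 \<and> c + 1 < hi \<and> c + 1 \<noteq> c" using a x assms by simp
      ultimately show False using nz by blast
    qed
  qed
  then show ?thesis using assms(1-3) by auto
qed

lemma v_endpoint:
  assumes "lo \<le> c" "c < hi" "y = c \<or> y = c + 1"
    and nz: "\<forall>i. lo \<le> i \<and> i < hi \<and> i \<noteq> c \<longrightarrow> (x,y) \<notin> vE x i"
  shows "lo \<le> y \<and> y \<le> hi \<and> (y = lo \<or> y = hi)"
proof -
  have "\<not> (lo < y \<and> y < hi)"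
  proof
    assume a: "lo < y \<and> y < hi"
    show False
    proof (cases "y = c")
      case True
      then have "(x,y) \<in> vE x (c-1)" unfolding vE_def by simp
      moreover have "lo \<le> c - 1 \<and> c - 1 < hi \<and> c - 1 \<noteq> c" using a True assms by simp
      ultimately show False using nz by blast
    next
      case False
      then have x: "y = c + 1" using assms by simp
      then have "(x,y) \<in> vE x (c+1)" unfolding vE_def by simp
      moreover have "lo \<le> c + 1 \<and> c + 1 < hi \<and> c + 1 \<noteq> c" using a x assms by simp
      ultimately show False using nz by blast
    qed
  qed
  then show ?thesis using assms(1-3) by auto
qed

lemma hv_meet:
  assumes "p \<in> hE c y" "p \<in> vE x b"
  shows "p = (x,y) \<and> (x = c \<or> x = c + 1) \<and> (y = b \<or> y = b + 1)"
  using assms unfolding hE_def vE_def by auto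


lemma card1_ne: "card S = 1 \<Longrightarrow> \<exists>p. p \<in> S"
  by (metis One_nat_def card.empty ex_in_conv zero_neq_one)

lemma bend_hv:
  assumes gp: "grid_path es" and l: "n < length es" and mn: "m < n"
    and A: "(\<lambda>k. es ! k) ` {0..m} = {hE i y | i. lo \<le> i \<and> i < hi}"
    and B: "(\<lambda>k. es ! k) ` {Suc m..n} = {vE x j | j. lo' \<le> j \<and> j < hi'}"
  shows "lo \<le> x \<and> x \<le> hi \<and> (x = lo \<or> x = hi) \<and> lo' \<le> y \<and> y \<le> hi' \<and> (y = lo' \<or> y = hi')"
proof -
  have "es ! m \<in> (\<lambda>k. es ! k) ` {0..m}" by simp
  then have "es ! m \<in> {hE i y | i. lo \<le> i \<and> i < hi}" using A by simp
  then obtain c where c: "es ! m = hE c y" "lo \<le> c" "c < hi" by blast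
  have "es ! Suc m \<in> (\<lambda>k. es ! k) ` {Suc m..n}" using mn by simp
  then have "es ! Suc m \<in> {vE x j | j. lo' \<le> j \<and> j < hi'}" using B by simp
  then obtain b where b: "es ! Suc m = vE x b" "lo' \<le> b" "b < hi'" by blast
  have "card (es ! m \<inter> es ! Suc m) = 1" using gp_card1[OF gp, of m] l mn by simp
  then obtain p where p: "p \<in> es ! m \<inter> es ! Suc m" using card1_ne by blast
  then have pm: "p \<in> es ! m" "p \<in> es ! Suc m" by auto
  have hv: "p = (x,y) \<and> (x = c \<or> x = c + 1) \<and> (y = b \<or> y = b + 1)"
    using hv_meet[of p c y x b] pm c b by simp
  note bc = bend_core[OF gp l mn pm]
  have nz1: "\<forall>i. lo \<le> i \<and> i < hi \<and> i \<noteq> c \<longrightarrow> (x,y) \<notin> hE i y"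
  proof (intro allI impI)
    fix i assume i: "lo \<le> i \<and> i < hi \<and> i \<noteq> c"
    then have "hE i y \<in> {hE i y | i. lo \<le> i \<and> i < hi}" by (intro CollectI exI[of _ i]) simp
    then have "hE i y \<in> (\<lambda>k. es ! k) ` {0..m}" using A by simp
    moreover have "hE i y \<noteq> es ! m" using c i by simp
    ultimately show "(x,y) \<notin> hE i y" using bc(1) hv by blast
  qed
  have nz2: "\<forall>i. lo' \<le> i \<and> i < hi' \<and> i \<noteq> b \<longrightarrow> (x,y) \<notin> vE x i"
  proof (intro allI impI)
    fix i assume i: "lo' \<le> i \<and> i < hi' \<and> i \<noteq> b"
    then have "vE x i \<in> {vE x j | j. lo' \<le> j \<and> j < hi'}" by (intro CollectI exI[of _ i]) simp
    then have "vE x i \<in> (\<lambda>k. es ! k) ` {Suc m..n}" using B by simp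
    moreover have "vE x i \<noteq> es ! Suc m" using b i by simp
    ultimately show "(x,y) \<notin> vE x i" using bc(2) hv by blast
  qed
  show ?thesis using h_endpoint[OF c(2,3) _ nz1] v_endpoint[OF b(2,3) _ nz2] hv by blast
qed

lemma bend_vh:
  assumes gp: "grid_path es" and l: "n < length es" and mn: "m < n"
    and A: "(\<lambda>k. es ! k) ` {0..m} = {vE x j | j. lo \<le> j \<and> j < hi}"
    and B: "(\<lambda>k. es ! k) ` {Suc m..n} = {hE i y | i. lo' \<le> i \<and> i < hi'}"
  shows "lo' \<le> x \<and> x \<le> hi' \<and> (x = lo' \<or> x = hi') \<and> lo \<le> y \<and> y \<le> hi \<and> (y = lo \<or> y = hi)"
proof -
  have "es ! m \<in> (\<lambda>k. es ! k) ` {0..m}" by simp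
  then have "es ! m \<in> {vE x j | j. lo \<le> j \<and> j < hi}" using A by simp
  then obtain b where b: "es ! m = vE x b" "lo \<le> b" "b < hi" by blast
  have "es ! Suc m \<in> (\<lambda>k. es ! k) ` {Suc m..n}" using mn by simp
  then have "es ! Suc m \<in> {hE i y | i. lo' \<le> i \<and> i < hi'}" using B by simp
  then obtain c where c: "es ! Suc m = hE c y" "lo' \<le> c" "c < hi'" by blast
  have "card (es ! m \<inter> es ! Suc m) = 1" using gp_card1[OF gp, of m] l mn by simp
  then obtain p where p: "p \<in> es ! m \<inter> es ! Suc m" using card1_ne by blast
  then have pm: "p \<in> es ! m" "p \<in> es ! Suc m" by auto
  have hv: "p = (x,y) \<and> (x = c \<or> x = c + 1) \<and> (y = b \<or> y = b + 1)"
    using hv_meet[of p c y x b] pm c b by simp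
  note bc = bend_core[OF gp l mn pm]
  have nz1: "\<forall>i. lo' \<le> i \<and> i < hi' \<and> i \<noteq> c \<longrightarrow> (x,y) \<notin> hE i y"
  proof (intro allI impI)
    fix i assume i: "lo' \<le> i \<and> i < hi' \<and> i \<noteq> c"
    then have "hE i y \<in> {hE i y | i. lo' \<le> i \<and> i < hi'}" by (intro CollectI exI[of _ i]) simp
    then have "hE i y \<in> (\<lambda>k. es ! k) ` {Suc m..n}" using B by simp
    moreover have "hE i y \<noteq> es ! Suc m" using c i by simp
    ultimately show "(x,y) \<notin> hE i y" using bc(2) hv by blast
  qed
  have nz2: "\<forall>i. lo \<le> i \<and> i < hi \<and> i \<noteq> b \<longrightarrow> (x,y) \<notin> vE x i"
  proof (intro allI impI)
    fix i assume i: "lo \<le> i \<and> i < hi \<and> i \<noteq> b"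
    then have "vE x i \<in> {vE x j | j. lo \<le> j \<and> j < hi}" by (intro CollectI exI[of _ i]) simp
    then have "vE x i \<in> (\<lambda>k. es ! k) ` {0..m}" using A by simp
    moreover have "vE x i \<noteq> es ! m" using b i by simp
    ultimately show "(x,y) \<notin> vE x i" using bc(1) hv by blast
  qed
  show ?thesis using h_endpoint[OF c(2,3) _ nz1] v_endpoint[OF b(2,3) _ nz2] hv by blast
qed


definition rep :: "gpath \<Rightarrow> int \<Rightarrow> int \<Rightarrow> int \<Rightarrow> int \<Rightarrow> int \<Rightarrow> int \<Rightarrow> bool" where
  "rep es x y hl hr vl vr \<longleftrightarrow> hl \<le> x \<and> x \<le> hr \<and> (x = hl \<or> x = hr) \<and> vl \<le> y \<and> y \<le> vr \<and>
     (y = vl \<or> y = vr) \<and> (hl < hr \<or> vl < vr) \<and>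
     set es = {hE i y | i. hl \<le> i \<and> i < hr} \<union> {vE x j | j. vl \<le> j \<and> j < vr}"

lemma empty_range: "{f i | i::int. a \<le> i \<and> i < a} = {}" by auto

lemma set_whole: "length es = Suc n \<Longrightarrow> set es = (\<lambda>k. es ! k) ` {0..0+n}"
proof -
  assume "length es = Suc n"
  then have "{0..0+n} = {..<length es}" by auto
  then show ?thesis by (simp add: set_conv_nth image_def) (auto simp: atLeastAtMost_iff)
qed

lemma set_split: "length es = Suc n \<Longrightarrow> m < n \<Longrightarrow> set es = (\<lambda>k. es ! k) ` {0..m} \<union> (\<lambda>k. es ! k) ` {Suc m..Suc m + (n - Suc m)}"
proof -
  assume a: "length es = Suc n" "m < n"
  then have "{0..m} \<union> {Suc m..Suc m + (n - Suc m)} = {..<length es}" by auto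
  then have "(\<lambda>k. es ! k) ` {0..m} \<union> (\<lambda>k. es ! k) ` {Suc m..Suc m + (n - Suc m)} = (\<lambda>k. es ! k) ` {..<length es}"
    by (metis image_Un)
  also have "\<dots> = set es" by (auto simp: set_conv_nth)
  finally show ?thesis by simp
qed

lemma rep_exists:
  assumes gp: "grid_path es" and nb: "num_bends es \<le> 1"
  shows "\<exists>x y hl hr vl vr. rep es x y hl hr vl vr"
proof -
  have ne: "es \<noteq> []" using gp unfolding grid_path_def by blast
  then obtain n where len: "length es = Suc n" by (cases es) auto
  define S where "S = {i. Suc i < length es \<and> horizontal (es ! i) \<noteq> horizontal (es ! Suc i)}"
  have fin: "finite S" unfolding S_def by (rule finite_subset[of _ "{..<length es}"]) auto
  have "card S \<le> 1" using nb unfolding num_bends_def S_def .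
  then have one: "\<forall>a\<in>S. \<forall>b\<in>S. a = b" using card_le_Suc0_iff_eq[OF fin] by simp
  show ?thesis
  proof (cases "S = {}")
    case True
    have eq: "\<forall>i. Suc i < length es \<and> i \<noteq> n \<longrightarrow> horizontal (es ! i) = horizontal (es ! Suc i)"
    proof (intro allI impI)
      fix i assume i: "Suc i < length es \<and> i \<noteq> n"
      have "i \<notin> S" using True by simp
      then show "horizontal (es ! i) = horizontal (es ! Suc i)" using i unfolding S_def by blast
    qed
    have all: "horizontal (es ! k) = horizontal (es ! 0)" if "0 \<le> k \<and> k \<le> 0 + n" for k
      using orient1[OF eq, of k] that len by simp
    have l: "0 + n < length es" using len by simp
    have sw: "set es = (\<lambda>k. es ! k) ` {0..0+n}" using set_whole[OF len] .
    show ?thesis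
    proof (cases "horizontal (es ! 0)")
      case True
      have "\<forall>k. 0 \<le> k \<and> k \<le> 0 + n \<longrightarrow> horizontal (es ! k)"
      proof (intro allI impI)
        fix k assume "0 \<le> k \<and> k \<le> 0 + n"
        then have "horizontal (es ! k) = horizontal (es ! 0)" by (rule all)
        then show "horizontal (es ! k)" using True by simp
      qed
      from straight_h[OF gp l this] obtain y lo hi where
        lh: "lo < hi" and H: "(\<lambda>k. es ! k) ` {0..0+n} = {hE i y | i. lo \<le> i \<and> i < hi}"
        by (elim exE conjE) (rule that)
      have e: "{vE lo j | j. y \<le> j \<and> j < y} = {}" by auto
      have "set es = {hE i y | i. lo \<le> i \<and> i < hi} \<union> {vE lo j | j. y \<le> j \<and> j < y}"
        unfolding e using H sw by simp
      then have "rep es lo y lo hi y y" unfolding rep_def using lh by simp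
      then show ?thesis by blast
    next
      case False
      have "\<forall>k. 0 \<le> k \<and> k \<le> 0 + n \<longrightarrow> \<not> horizontal (es ! k)"
      proof (intro allI impI)
        fix k assume "0 \<le> k \<and> k \<le> 0 + n"
        then have "horizontal (es ! k) = horizontal (es ! 0)" by (rule all)
        then show "\<not> horizontal (es ! k)" using False by simp
      qed
      from straight_v[OF gp l this] obtain x lo hi where
        lh: "lo < hi" and V: "(\<lambda>k. es ! k) ` {0..0+n} = {vE x i | i. lo \<le> i \<and> i < hi}"
        by (elim exE conjE) (rule that)
      have e: "{hE i lo | i. x \<le> i \<and> i < x} = {}" by auto
      have "set es = {hE i lo | i. x \<le> i \<and> i < x} \<union> {vE x j | j. lo \<le> j \<and> j < hi}"
        unfolding e using V sw by simp
      then have "rep es x lo x x lo hi" unfolding rep_def using lh by simp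
      then show ?thesis by blast
    qed
  next
    case False
    then obtain m where mS: "m \<in> S" by blast
    then have mn: "m < n" and mb: "horizontal (es ! m) \<noteq> horizontal (es ! Suc m)"
      unfolding S_def using len by auto
    have eq: "\<forall>i. Suc i < length es \<and> i \<noteq> m \<longrightarrow> horizontal (es ! i) = horizontal (es ! Suc i)"
    proof (intro allI impI)
      fix i assume i: "Suc i < length es \<and> i \<noteq> m"
      show "horizontal (es ! i) = horizontal (es ! Suc i)"
      proof (rule ccontr)
        assume "horizontal (es ! i) \<noteq> horizontal (es ! Suc i)"
        then have "i \<in> S" unfolding S_def using i by blast
        then show False using one mS i by blast
      qed
    qed
    have o1: "horizontal (es ! k) = horizontal (es ! 0)" if "0 \<le> k \<and> k \<le> 0 + m" for k
      using orient1[OF eq, of k] that len mn by simp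
    have o2: "horizontal (es ! k) = horizontal (es ! Suc m)" if "Suc m \<le> k \<and> k \<le> Suc m + (n - Suc m)" for k
    proof (cases "k = Suc m")
      case True then show ?thesis by simp
    next
      case False then show ?thesis using orient2[OF eq, of k] that len mn by simp
    qed
    have om: "horizontal (es ! m) = horizontal (es ! 0)" using o1[of m] by simp
    have l1: "0 + m < length es" using len mn by simp
    have l2: "Suc m + (n - Suc m) < length es" using len mn by simp
    have nn: "Suc m + (n - Suc m) = n" using mn by simp
    have sp: "set es = (\<lambda>k. es ! k) ` {0..m} \<union> (\<lambda>k. es ! k) ` {Suc m..Suc m + (n - Suc m)}"
      using set_split[OF len mn] .
    have ln: "n < length es" using len by simp
    show ?thesis
    proof (cases "horizontal (es ! 0)")
      case True
      have "\<forall>k. 0 \<le> k \<and> k \<le> 0 + m \<longrightarrow> horizontal (es ! k)"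
      proof (intro allI impI)
        fix k assume "0 \<le> k \<and> k \<le> 0 + m"
        then have "horizontal (es ! k) = horizontal (es ! 0)" by (rule o1)
        then show "horizontal (es ! k)" using True by simp
      qed
      from straight_h[OF gp l1 this] obtain y lo hi where
        lh: "lo < hi" and H: "(\<lambda>k. es ! k) ` {0..0+m} = {hE i y | i. lo \<le> i \<and> i < hi}"
        by (elim exE conjE) (rule that)
      have ns: "\<not> horizontal (es ! Suc m)" using True om mb by simp
      have "\<forall>k. Suc m \<le> k \<and> k \<le> Suc m + (n - Suc m) \<longrightarrow> \<not> horizontal (es ! k)"
      proof (intro allI impI)
        fix k assume "Suc m \<le> k \<and> k \<le> Suc m + (n - Suc m)"
        then have "horizontal (es ! k) = horizontal (es ! Suc m)" by (rule o2)
        then show "\<not> horizontal (es ! k)" using ns by simp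
      qed
      from straight_v[OF gp l2 this] obtain x lo' hi' where
        lh': "lo' < hi'" and V: "(\<lambda>k. es ! k) ` {Suc m..Suc m + (n - Suc m)} = {vE x i | i. lo' \<le> i \<and> i < hi'}"
        by (elim exE conjE) (rule that)
      have H': "(\<lambda>k. es ! k) ` {0..m} = {hE i y | i. lo \<le> i \<and> i < hi}" using H by simp
      have V': "(\<lambda>k. es ! k) ` {Suc m..n} = {vE x i | i. lo' \<le> i \<and> i < hi'}" using V unfolding nn .
      have ep: "lo \<le> x \<and> x \<le> hi \<and> (x = lo \<or> x = hi) \<and> lo' \<le> y \<and> y \<le> hi' \<and> (y = lo' \<or> y = hi')"
        using bend_hv[OF gp ln mn H' V'] .
      have "set es = {hE i y | i. lo \<le> i \<and> i < hi} \<union> {vE x j | j. lo' \<le> j \<and> j < hi'}"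
        using sp H' V by simp
      then have "rep es x y lo hi lo' hi'" unfolding rep_def using ep lh by simp
      then show ?thesis by blast
    next
      case False
      have "\<forall>k. 0 \<le> k \<and> k \<le> 0 + m \<longrightarrow> \<not> horizontal (es ! k)"
      proof (intro allI impI)
        fix k assume "0 \<le> k \<and> k \<le> 0 + m"
        then have "horizontal (es ! k) = horizontal (es ! 0)" by (rule o1)
        then show "\<not> horizontal (es ! k)" using False by simp
      qed
      from straight_v[OF gp l1 this] obtain x lo hi where
        lh: "lo < hi" and V: "(\<lambda>k. es ! k) ` {0..0+m} = {vE x i | i. lo \<le> i \<and> i < hi}"
        by (elim exE conjE) (rule that)
      have ns: "horizontal (es ! Suc m)" using False om mb by simp
      have "\<forall>k. Suc m \<le> k \<and> k \<le> Suc m + (n - Suc m) \<longrightarrow> horizontal (es ! k)"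
      proof (intro allI impI)
        fix k assume "Suc m \<le> k \<and> k \<le> Suc m + (n - Suc m)"
        then have "horizontal (es ! k) = horizontal (es ! Suc m)" by (rule o2)
        then show "horizontal (es ! k)" using ns by simp
      qed
      from straight_h[OF gp l2 this] obtain y lo' hi' where
        lh': "lo' < hi'" and H: "(\<lambda>k. es ! k) ` {Suc m..Suc m + (n - Suc m)} = {hE i y | i. lo' \<le> i \<and> i < hi'}"
        by (elim exE conjE) (rule that)
      have V': "(\<lambda>k. es ! k) ` {0..m} = {vE x i | i. lo \<le> i \<and> i < hi}" using V by simp
      have H': "(\<lambda>k. es ! k) ` {Suc m..n} = {hE i y | i. lo' \<le> i \<and> i < hi'}" using H unfolding nn .
      have ep: "lo' \<le> x \<and> x \<le> hi' \<and> (x = lo' \<or> x = hi') \<and> lo \<le> y \<and> y \<le> hi \<and> (y = lo \<or> y = hi)"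
        using bend_vh[OF gp ln mn V' H'] .
      have "set es = {hE i y | i. lo' \<le> i \<and> i < hi'} \<union> {vE x j | j. lo \<le> j \<and> j < hi}"
        using sp V' H by (simp add: Un_commute)
      then have "rep es x y lo' hi' lo hi" unfolding rep_def using ep lh by simp
      then show ?thesis by blast
    qed
  qed
qed


lemma rep_memH:
  assumes "rep es x y hl hr vl vr"
  shows "hE i y' \<in> set es \<longleftrightarrow> y' = y \<and> hl \<le> i \<and> i < hr"
proof -
  have "set es = {hE i y | i. hl \<le> i \<and> i < hr} \<union> {vE x j | j. vl \<le> j \<and> j < vr}"
    using assms unfolding rep_def by blast
  then show ?thesis by auto
qed

lemma rep_memV:
  assumes "rep es x y hl hr vl vr"
  shows "vE x' j \<in> set es \<longleftrightarrow> x' = x \<and> vl \<le> j \<and> j < vr"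
proof -
  have "set es = {hE i y | i. hl \<le> i \<and> i < hr} \<union> {vE x j | j. vl \<le> j \<and> j < vr}"
    using assms unfolding rep_def by blast
  then show ?thesis by auto
qed

lemma share_iff:
  assumes p: "rep P x y hl hr vl vr" and q: "rep Q x' y' hl' hr' vl' vr'"
  shows "shares_edge P Q \<longleftrightarrow> ((y = y' \<and> hl < hr' \<and> hl' < hr \<and> hl < hr \<and> hl' < hr') \<or>
            (x = x' \<and> vl < vr' \<and> vl' < vr \<and> vl < vr \<and> vl' < vr'))"
proof
  assume "shares_edge P Q"
  then obtain e where e: "e \<in> set P" "e \<in> set Q" unfolding shares_edge_def by blast
  have sp: "set P = {hE i y | i. hl \<le> i \<and> i < hr} \<union> {vE x j | j. vl \<le> j \<and> j < vr}"
    using p unfolding rep_def by blast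
  from e(1) sp consider (h) i where "e = hE i y" "hl \<le> i" "i < hr" | (v) j where "e = vE x j" "vl \<le> j" "j < vr"
    by blast
  then show "((y = y' \<and> hl < hr' \<and> hl' < hr \<and> hl < hr \<and> hl' < hr') \<or>
            (x = x' \<and> vl < vr' \<and> vl' < vr \<and> vl < vr \<and> vl' < vr'))"
  proof cases
    case h
    then have "y = y' \<and> hl' \<le> i \<and> i < hr'" using rep_memH[OF q, of i y] e(2) by simp
    then show ?thesis using h by auto
  next
    case v
    then have "x = x' \<and> vl' \<le> j \<and> j < vr'" using rep_memV[OF q, of x j] e(2) by simp
    then show ?thesis using v by auto
  qed
next
  assume a: "((y = y' \<and> hl < hr' \<and> hl' < hr \<and> hl < hr \<and> hl' < hr') \<or>
            (x = x' \<and> vl < vr' \<and> vl' < vr \<and> vl < vr \<and> vl' < vr'))"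
  then show "shares_edge P Q"
  proof
    assume b: "y = y' \<and> hl < hr' \<and> hl' < hr \<and> hl < hr \<and> hl' < hr'"
    have "hE (max hl hl') y \<in> set P" using rep_memH[OF p, of "max hl hl'" y] b by simp
    moreover have "hE (max hl hl') y \<in> set Q" using rep_memH[OF q, of "max hl hl'" y] b by simp
    ultimately show ?thesis unfolding shares_edge_def by blast
  next
    assume b: "x = x' \<and> vl < vr' \<and> vl' < vr \<and> vl < vr \<and> vl' < vr'"
    have "vE x (max vl vl') \<in> set P" using rep_memV[OF p, of x "max vl vl'"] b by simp
    moreover have "vE x (max vl vl') \<in> set Q" using rep_memV[OF q, of x "max vl vl'"] b by simp
    ultimately show ?thesis unfolding shares_edge_def by blast
  qed
qed

lemma bend_from_set:
  assumes gp: "grid_path P" and e1: "{b, mv b d1} \<in> set P" and e2: "{b, mv b d2} \<in> set P"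
    and ne: "{b, mv b d1} \<noteq> {b, mv b d2}"
  shows "bend_at P b d1 d2"
proof -
  obtain i where i: "i < length P" "P ! i = {b, mv b d1}" using e1 by (auto simp: in_set_conv_nth)
  obtain j where j: "j < length P" "P ! j = {b, mv b d2}" using e2 by (auto simp: in_set_conv_nth)
  have ij: "i \<noteq> j" using i j ne by auto
  have bi: "b \<in> P ! i \<inter> P ! j" using i j by auto
  have "\<not> Suc i < j" using gp_disj[OF gp, of i j] j bi by auto
  moreover have "\<not> Suc j < i" using gp_disj[OF gp, of j i] i bi by auto
  ultimately have "j = Suc i \<or> i = Suc j" using ij by auto
  then show ?thesis
  proof
    assume "j = Suc i"
    then show ?thesis unfolding bend_at_def using i j by (intro exI[of _ i]) auto
  next
    assume "i = Suc j"
    then show ?thesis unfolding bend_at_def using i j by (intro exI[of _ j]) auto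
  qed
qed

declare [[smt_timeout = 1000]]
definition shf :: "('v\<Rightarrow>int) \<Rightarrow> ('v\<Rightarrow>int) \<Rightarrow> ('v\<Rightarrow>int) \<Rightarrow> ('v\<Rightarrow>int) \<Rightarrow> ('v\<Rightarrow>int) \<Rightarrow> ('v\<Rightarrow>int) \<Rightarrow> 'v \<Rightarrow> 'v \<Rightarrow> bool" where
  "shf X Y HL HR VL VR u v \<longleftrightarrow> (Y u = Y v \<and> HL u < HR v \<and> HL v < HR u \<and> HL u < HR u \<and> HL v < HR v) \<or>
     (X u = X v \<and> VL u < VR v \<and> VL v < VR u \<and> VL u < VR u \<and> VL v < VR v)"

definition wff :: "('v\<Rightarrow>int) \<Rightarrow> ('v\<Rightarrow>int) \<Rightarrow> ('v\<Rightarrow>int) \<Rightarrow> ('v\<Rightarrow>int) \<Rightarrow> ('v\<Rightarrow>int) \<Rightarrow> ('v\<Rightarrow>int) \<Rightarrow> 'v \<Rightarrow> bool" where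
  "wff X Y HL HR VL VR u \<longleftrightarrow> HL u \<le> X u \<and> X u \<le> HR u \<and> (X u = HL u \<or> X u = HR u) \<and>
     VL u \<le> Y u \<and> Y u \<le> VR u \<and> (Y u = VL u \<or> Y u = VR u) \<and> (HL u < HR u \<or> VL u < VR u)"

definition Lp :: "('v\<Rightarrow>int) \<Rightarrow> ('v\<Rightarrow>int) \<Rightarrow> ('v\<Rightarrow>int) \<Rightarrow> ('v\<Rightarrow>int) \<Rightarrow> ('v\<Rightarrow>int) \<Rightarrow> ('v\<Rightarrow>int) \<Rightarrow> 'v \<Rightarrow> 'v \<Rightarrow> 'v \<Rightarrow> bool" where
  "Lp X Y HL HR VL VR u w1 w2 \<longleftrightarrow> HL u < HR u \<and> VL u < VR u \<and>
     (let eh = (if X u = HL u then X u else X u - 1); ev = (if Y u = VL u then Y u else Y u - 1) in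
       \<not> (Y w1 = Y u \<and> HL w1 \<le> eh \<and> eh < HR w1) \<and> \<not> (X w1 = X u \<and> VL w1 \<le> ev \<and> ev < VR w1) \<and>
       \<not> (Y w2 = Y u \<and> HL w2 \<le> eh \<and> eh < HR w2) \<and> \<not> (X w2 = X u \<and> VL w2 \<le> ev \<and> ev < VR w2))"

definition sqf :: "('v\<Rightarrow>int) \<Rightarrow> ('v\<Rightarrow>int) \<Rightarrow> ('v\<Rightarrow>int) \<Rightarrow> ('v\<Rightarrow>int) \<Rightarrow> ('v\<Rightarrow>int) \<Rightarrow> ('v\<Rightarrow>int) \<Rightarrow> 'v \<Rightarrow> 'v \<Rightarrow> 'v \<Rightarrow> 'v \<Rightarrow> bool" where
  "sqf X Y HL HR VL VR a b c d \<longleftrightarrow> X a < X b \<and> Y a < Y c \<and>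
     HL a \<le> X a \<and> X a < HR a \<and> VL a \<le> Y a \<and> Y a < VR a \<and>
     Y b = Y a \<and> HL b \<le> X b - 1 \<and> X b - 1 < HR b \<and> VL b \<le> Y a \<and> Y a < VR b \<and>
     Y c = Y c \<and> HL c \<le> X a \<and> X a < HR c \<and> X c = X a \<and> VL c \<le> Y c - 1 \<and> Y c - 1 < VR c \<and>
     Y d = Y c \<and> HL d \<le> X b - 1 \<and> X b - 1 < HR d \<and> X d = X b \<and> VL d \<le> Y c - 1 \<and> Y c - 1 < VR d"

lemma k24_lia:
  fixes X Y HL HR VL VR :: "'v \<Rightarrow> int" and u wa wb aa ab ba bb bc :: 'v
  assumes "wff X Y HL HR VL VR u"
    and "wff X Y HL HR VL VR wa"
    and "wff X Y HL HR VL VR wb"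
    and "wff X Y HL HR VL VR aa"
    and "wff X Y HL HR VL VR ab"
    and "wff X Y HL HR VL VR ba"
    and "wff X Y HL HR VL VR bb"
    and "wff X Y HL HR VL VR bc"
    and "shf X Y HL HR VL VR u wa"
    and "shf X Y HL HR VL VR u wb"
    and "shf X Y HL HR VL VR u aa"
    and "shf X Y HL HR VL VR u ab"
    and "\<not> shf X Y HL HR VL VR u ba"
    and "\<not> shf X Y HL HR VL VR u bb"
    and "\<not> shf X Y HL HR VL VR u bc"
    and "\<not> shf X Y HL HR VL VR wa wb"
    and "\<not> shf X Y HL HR VL VR wa aa"
    and "\<not> shf X Y HL HR VL VR wa ab"
    and "\<not> shf X Y HL HR VL VR wa ba"
    and "\<not> shf X Y HL HR VL VR wa bb"
    and "\<not> shf X Y HL HR VL VR wa bc"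
    and "\<not> shf X Y HL HR VL VR wb aa"
    and "\<not> shf X Y HL HR VL VR wb ab"
    and "\<not> shf X Y HL HR VL VR wb ba"
    and "\<not> shf X Y HL HR VL VR wb bb"
    and "\<not> shf X Y HL HR VL VR wb bc"
    and "\<not> shf X Y HL HR VL VR aa ab"
    and "shf X Y HL HR VL VR aa ba"
    and "shf X Y HL HR VL VR aa bb"
    and "shf X Y HL HR VL VR aa bc"
    and "shf X Y HL HR VL VR ab ba"
    and "shf X Y HL HR VL VR ab bb"
    and "shf X Y HL HR VL VR ab bc"
    and "\<not> shf X Y HL HR VL VR ba bb"
    and "\<not> shf X Y HL HR VL VR ba bc"
    and "\<not> shf X Y HL HR VL VR bb bc"
  shows "Lp X Y HL HR VL VR u wa wb"
  using assms unfolding shf_def wff_def Lp_def Let_def by (smt (z3))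

lemma c4_lia:
  fixes X Y HL HR VL VR :: "'v \<Rightarrow> int" and pa pb pc pd :: 'v
  assumes "wff X Y HL HR VL VR pa"
    and "wff X Y HL HR VL VR pb"
    and "wff X Y HL HR VL VR pc"
    and "wff X Y HL HR VL VR pd"
    and "shf X Y HL HR VL VR pa pb"
    and "\<not> shf X Y HL HR VL VR pa pc"
    and "shf X Y HL HR VL VR pa pd"
    and "shf X Y HL HR VL VR pb pc"
    and "\<not> shf X Y HL HR VL VR pb pd"
    and "shf X Y HL HR VL VR pc pd"
    and "Lp X Y HL HR VL VR pa pd pb"
    and "Lp X Y HL HR VL VR pb pa pc"
    and "Lp X Y HL HR VL VR pc pb pd"
    and "Lp X Y HL HR VL VR pd pc pa"
  shows "sqf X Y HL HR VL VR pa pb pd pc \<or>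
    sqf X Y HL HR VL VR pa pd pb pc \<or>
    sqf X Y HL HR VL VR pb pc pa pd \<or>
    sqf X Y HL HR VL VR pb pa pc pd \<or>
    sqf X Y HL HR VL VR pc pd pb pa \<or>
    sqf X Y HL HR VL VR pc pb pd pa \<or>
    sqf X Y HL HR VL VR pd pa pc pb \<or>
    sqf X Y HL HR VL VR pd pc pa pb"
  using assms unfolding shf_def wff_def Lp_def sqf_def Let_def by (smt (z3))

lemma to_sf:
  fixes X Y HL HR VL VR :: "'v \<Rightarrow> int" and P :: "'v \<Rightarrow> gpath"
  assumes ga: "grid_path (P a)" and gb: "grid_path (P b)" and gc: "grid_path (P c)" and gd: "grid_path (P d)"
    and ra: "rep (P a) (X a) (Y a) (HL a) (HR a) (VL a) (VR a)"
    and rb: "rep (P b) (X b) (Y b) (HL b) (HR b) (VL b) (VR b)"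
    and rc: "rep (P c) (X c) (Y c) (HL c) (HR c) (VL c) (VR c)"
    and rd: "rep (P d) (X d) (Y d) (HL d) (HR d) (VL d) (VR d)"
    and s1: "shares_edge (P a) (P b)" and s2: "shares_edge (P a) (P c)"
    and s3: "shares_edge (P b) (P d)" and s4: "shares_edge (P c) (P d)"
    and s5: "\<not> shares_edge (P a) (P d)" and s6: "\<not> shares_edge (P b) (P c)"
    and q: "sqf X Y HL HR VL VR a b c d"
  shows "square_frame (P a) (P b) (P c) (P d)"
proof -
  define x1 where "x1 = X a"
  define y1 where "y1 = Y a"
  define x2 where "x2 = X b"
  define y2 where "y2 = Y c"
  have q': "x1 < x2 \<and> y1 < y2 \<and>
     HL a \<le> x1 \<and> x1 < HR a \<and> VL a \<le> y1 \<and> y1 < VR a \<and>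
     Y b = y1 \<and> HL b \<le> x2 - 1 \<and> x2 - 1 < HR b \<and> VL b \<le> y1 \<and> y1 < VR b \<and>
     HL c \<le> x1 \<and> x1 < HR c \<and> X c = x1 \<and> VL c \<le> y2 - 1 \<and> y2 - 1 < VR c \<and>
     Y d = y2 \<and> HL d \<le> x2 - 1 \<and> x2 - 1 < HR d \<and> X d = x2 \<and> VL d \<le> y2 - 1 \<and> y2 - 1 < VR d"
    using q unfolding sqf_def x1_def y1_def x2_def y2_def by simp
  have e_up: "{(x,y), mv (x,y) dir_up} = vE x y" for x y :: int unfolding mv_def vE_def by simp
  have e_right: "{(x,y), mv (x,y) dir_right} = hE x y" for x y :: int unfolding mv_def hE_def by simp
  have e_left: "{(x,y), mv (x,y) dir_left} = hE (x - 1) y" for x y :: int unfolding mv_def hE_def by auto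
  have e_down: "{(x,y), mv (x,y) dir_down} = vE x (y - 1)" for x y :: int unfolding mv_def vE_def by auto
  have b1: "bend_at (P a) (x1, y1) dir_up dir_right"
    apply (rule bend_from_set[OF ga])
    unfolding e_up e_right using rep_memH[OF ra] rep_memV[OF ra] q' x1_def y1_def by simp_all
  have b2: "bend_at (P b) (x2, y1) dir_up dir_left"
    apply (rule bend_from_set[OF gb])
    unfolding e_up e_left using rep_memH[OF rb] rep_memV[OF rb] q' x2_def by simp_all
  have b3: "bend_at (P c) (x1, y2) dir_down dir_right"
    apply (rule bend_from_set[OF gc])
    unfolding e_down e_right using rep_memH[OF rc] rep_memV[OF rc] q' y2_def by simp_all
  have b4: "bend_at (P d) (x2, y2) dir_down dir_left"
    apply (rule bend_from_set[OF gd])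
    unfolding e_down e_left using rep_memH[OF rd] rep_memV[OF rd] q' by simp_all
  show ?thesis unfolding square_frame_def
    using q' b1 b2 b3 b4 s1 s2 s3 s4 s5 s6 by blast
qed

theorem corollary2p2:
  fixes P :: "bat_vertex \<Rightarrow> gpath"
  assumes "B1_EPG_rep bat_V bat_adj P"
  shows "\<exists>a b c d. {a, b, c, d} = {U 0, U 1, U 2, U 3} \<and> square_frame (P a) (P b) (P c) (P d)"
proof -
  have gpv: "grid_path (P v) \<and> num_bends (P v) \<le> 1" if "v \<in> bat_V" for v
    using assms that unfolding B1_EPG_rep_def by blast
  have G: "grid_path (P v)" if "v \<in> bat_V" for v using gpv[OF that] by blast
  have SE: "shares_edge (P u) (P v) = bat_adj u v" if "u \<in> bat_V" "v \<in> bat_V" "u \<noteq> v" for u v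
    using assms that unfolding B1_EPG_rep_def by blast
  have "\<forall>v\<in>bat_V. \<exists>t. rep (P v) (fst t) (fst (snd t)) (fst (snd (snd t))) (fst (snd (snd (snd t))))
         (fst (snd (snd (snd (snd t))))) (snd (snd (snd (snd (snd t)))))"
  proof
    fix v assume "v \<in> bat_V"
    then obtain x y hl hr vl vr where "rep (P v) x y hl hr vl vr"
      using rep_exists gpv by blast
    then show "\<exists>t. rep (P v) (fst t) (fst (snd t)) (fst (snd (snd t))) (fst (snd (snd (snd t))))
         (fst (snd (snd (snd (snd t))))) (snd (snd (snd (snd (snd t)))))"
      by (intro exI[of _ "(x,y,hl,hr,vl,vr)"]) simp
  qed
  then have "\<exists>f. \<forall>v\<in>bat_V. rep (P v) (fst (f v)) (fst (snd (f v))) (fst (snd (snd (f v)))) (fst (snd (snd (snd (f v)))))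
         (fst (snd (snd (snd (snd (f v)))))) (snd (snd (snd (snd (snd (f v))))))" by (rule bchoice)
  then obtain f where f: "\<forall>v\<in>bat_V. rep (P v) (fst (f v)) (fst (snd (f v))) (fst (snd (snd (f v)))) (fst (snd (snd (snd (f v)))))
         (fst (snd (snd (snd (snd (f v)))))) (snd (snd (snd (snd (snd (f v))))))"
    by (elim exE) (rule that)
  define X where "X v = fst (f v)" for v
  define Y where "Y v = fst (snd (f v))" for v
  define HL where "HL v = fst (snd (snd (f v)))" for v
  define HR where "HR v = fst (snd (snd (snd (f v))))" for v
  define VL where "VL v = fst (snd (snd (snd (snd (f v)))))" for v
  define VR where "VR v = snd (snd (snd (snd (snd (f v)))))" for v
  have R: "rep (P v) (X v) (Y v) (HL v) (HR v) (VL v) (VR v)" if "v \<in> bat_V" for v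
    using f that unfolding X_def Y_def HL_def HR_def VL_def VR_def by blast
  have W: "wff X Y HL HR VL VR v" if "v \<in> bat_V" for v
    using R[OF that] unfolding rep_def wff_def by blast
  have SH: "shf X Y HL HR VL VR u v = bat_adj u v" if "u \<in> bat_V" "v \<in> bat_V" "u \<noteq> v" for u v
    using share_iff[OF R[OF that(1)] R[OF that(2)]] SE[OF that] unfolding shf_def by simp
  have L0: "Lp X Y HL HR VL VR (U 0) (U 3) (U 1)"
    by (rule k24_lia[where u="U 0" and wa="U 3" and wb="U 1" and aa="A 0 0" and ab="A 0 1" and ba="B 0 1" and bb="B 0 2" and bc="B 0 3"])
      (simp_all add: W SH bat_V_def bat_adj_def)
  have L1: "Lp X Y HL HR VL VR (U 1) (U 0) (U 2)"
    by (rule k24_lia[where u="U 1" and wa="U 0" and wb="U 2" and aa="A 1 0" and ab="A 1 1" and ba="B 1 1" and bb="B 1 2" and bc="B 1 3"])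
      (simp_all add: W SH bat_V_def bat_adj_def)
  have L2: "Lp X Y HL HR VL VR (U 2) (U 1) (U 3)"
    by (rule k24_lia[where u="U 2" and wa="U 1" and wb="U 3" and aa="A 2 0" and ab="A 2 1" and ba="B 2 1" and bb="B 2 2" and bc="B 2 3"])
      (simp_all add: W SH bat_V_def bat_adj_def)
  have L3: "Lp X Y HL HR VL VR (U 3) (U 2) (U 0)"
    by (rule k24_lia[where u="U 3" and wa="U 2" and wb="U 0" and aa="A 3 0" and ab="A 3 1" and ba="B 3 1" and bb="B 3 2" and bc="B 3 3"])
      (simp_all add: W SH bat_V_def bat_adj_def)
  have C: "sqf X Y HL HR VL VR (U 0) (U 1) (U 3) (U 2) \<or> sqf X Y HL HR VL VR (U 0) (U 3) (U 1) (U 2) \<or> sqf X Y HL HR VL VR (U 1) (U 2) (U 0) (U 3) \<or> sqf X Y HL HR VL VR (U 1) (U 0) (U 2) (U 3) \<or> sqf X Y HL HR VL VR (U 2) (U 3) (U 1) (U 0) \<or> sqf X Y HL HR VL VR (U 2) (U 1) (U 3) (U 0) \<or> sqf X Y HL HR VL VR (U 3) (U 0) (U 2) (U 1) \<or> sqf X Y HL HR VL VR (U 3) (U 2) (U 0) (U 1)"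
    by (rule c4_lia[where pa="U 0" and pb="U 1" and pc="U 2" and pd="U 3", OF _ _ _ _ _ _ _ _ _ _ L0 L1 L2 L3])
      (simp_all add: W SH bat_V_def bat_adj_def L0 L1 L2 L3)
  then show ?thesis
  proof (elim disjE)
    assume h: "sqf X Y HL HR VL VR (U 0) (U 1) (U 3) (U 2)"
    have "square_frame (P (U 0)) (P (U 1)) (P (U 3)) (P (U 2))"
      by (rule to_sf[OF _ _ _ _ R R R R _ _ _ _ _ _ h]) (simp_all add: G SE bat_V_def bat_adj_def)
    moreover have "{U 0, U 1, U 3, U 2} = {U 0, U 1, U 2, U 3}" by auto
    ultimately show ?thesis by blast
  next
    assume h: "sqf X Y HL HR VL VR (U 0) (U 3) (U 1) (U 2)"
    have "square_frame (P (U 0)) (P (U 3)) (P (U 1)) (P (U 2))"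
      by (rule to_sf[OF _ _ _ _ R R R R _ _ _ _ _ _ h]) (simp_all add: G SE bat_V_def bat_adj_def)
    moreover have "{U 0, U 3, U 1, U 2} = {U 0, U 1, U 2, U 3}" by auto
    ultimately show ?thesis by blast
  next
    assume h: "sqf X Y HL HR VL VR (U 1) (U 2) (U 0) (U 3)"
    have "square_frame (P (U 1)) (P (U 2)) (P (U 0)) (P (U 3))"
      by (rule to_sf[OF _ _ _ _ R R R R _ _ _ _ _ _ h]) (simp_all add: G SE bat_V_def bat_adj_def)
    moreover have "{U 1, U 2, U 0, U 3} = {U 0, U 1, U 2, U 3}" by auto
    ultimately show ?thesis by blast
  next
    assume h: "sqf X Y HL HR VL VR (U 1) (U 0) (U 2) (U 3)"
    have "square_frame (P (U 1)) (P (U 0)) (P (U 2)) (P (U 3))"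
      by (rule to_sf[OF _ _ _ _ R R R R _ _ _ _ _ _ h]) (simp_all add: G SE bat_V_def bat_adj_def)
    moreover have "{U 1, U 0, U 2, U 3} = {U 0, U 1, U 2, U 3}" by auto
    ultimately show ?thesis by blast
  next
    assume h: "sqf X Y HL HR VL VR (U 2) (U 3) (U 1) (U 0)"
    have "square_frame (P (U 2)) (P (U 3)) (P (U 1)) (P (U 0))"
      by (rule to_sf[OF _ _ _ _ R R R R _ _ _ _ _ _ h]) (simp_all add: G SE bat_V_def bat_adj_def)
    moreover have "{U 2, U 3, U 1, U 0} = {U 0, U 1, U 2, U 3}" by auto
    ultimately show ?thesis by blast
  next
    assume h: "sqf X Y HL HR VL VR (U 2) (U 1) (U 3) (U 0)"
    have "square_frame (P (U 2)) (P (U 1)) (P (U 3)) (P (U 0))"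
      by (rule to_sf[OF _ _ _ _ R R R R _ _ _ _ _ _ h]) (simp_all add: G SE bat_V_def bat_adj_def)
    moreover have "{U 2, U 1, U 3, U 0} = {U 0, U 1, U 2, U 3}" by auto
    ultimately show ?thesis by blast
  next
    assume h: "sqf X Y HL HR VL VR (U 3) (U 0) (U 2) (U 1)"
    have "square_frame (P (U 3)) (P (U 0)) (P (U 2)) (P (U 1))"
      by (rule to_sf[OF _ _ _ _ R R R R _ _ _ _ _ _ h]) (simp_all add: G SE bat_V_def bat_adj_def)
    moreover have "{U 3, U 0, U 2, U 1} = {U 0, U 1, U 2, U 3}" by auto
    ultimately show ?thesis by blast
  next
    assume h: "sqf X Y HL HR VL VR (U 3) (U 2) (U 0) (U 1)"
    have "square_frame (P (U 3)) (P (U 2)) (P (U 0)) (P (U 1))"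
      by (rule to_sf[OF _ _ _ _ R R R R _ _ _ _ _ _ h]) (simp_all add: G SE bat_V_def bat_adj_def)
    moreover have "{U 3, U 2, U 0, U 1} = {U 0, U 1, U 2, U 3}" by auto
    ultimately show ?thesis by blast
  qed
qed
end
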